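(* Let $N=(V,A)$ be a phylogenetic network on $X$. Then the following are equivalent: (i) $N$ is tree-based. (ii) $N$ has an antichain $S\subseteq V$ and a partition of $V$ into $|S|$ chains, each of which forms a directed path in $N$ ending at a leaf in $X$. (iii) For every $U\subseteq V$, there exists a set of vertex-disjoint directed paths in $N$, each ending at a leaf in $X$, such that each element of $U$ lies on exactly one of these paths. (iv) The vertex set $V$ can be partitioned into a set of vertex-disjoint directed paths of $N$, each of which ends at a leaf in $X$. (v) The bipartite graph $\mathcal{G}_N$ has a matching of size $|V|-|X|$.
   Context: $X$ is a nonempty finite set. A phylogenetic network on $X$ is a rooted acyclic digraph with no parallel arcs such that: the unique root has out-degree at least one; $X$ is exactly the set of vertices of out-degree zero (leaves), each of in-degree one; every other vertex either has in-degree one and out-degree at least two (a tree vertex) or in-degree at least two and out-degree one (a reticulation). If $|X|=1$, the network may also consist of the single vertex in $X$. A phylogenetic $X$-tree is a phylogenetic network on $X$ with no reticulations. Subdividing an arc $(u,v)$ replaces it by arcs $(u,w),(w,v)$ with $w$ new; a subdivision is the result of a sequence of arc subdivisions. A phylogenetic network $N$ on $X$ is tree-based if it can be obtained from some phylogenetic $X$-tree $T$ (a base tree) by first taking a subdivision of $T$ (the new vertices are attachment points) and then adding new arcs $(u,v)$ (linking arcs) where either $u$ and $v$ are both attachment points, or $u$ is a non-leaf vertex of $T$ and $v$ is an attachment point; equivalently, $N$ has a rooted spanning tree with the same root as $N$ all of whose leaves lie in $X$. An antichain is a set of vertices no two of which are joined by a directed path. For a digraph $D=(V,A)$, $\mathcal{G}_D$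 is the bipartite graph with vertex bipartition $\{V_1,V_2\}$, where $V_1$ and $V_2$ are two disjoint copies of $V$, having an edge between the copy of $u$ in $V_1$ and the copy of $v$ in $V_2$ for each arc $(u,v)\in A$. *)

theory Defs
  imports Main
begin

text \<open>Digraphs are given by a vertex set V and an arc set A (pairs; so no parallel arcs).\<close>

definition indeg :: "('a \<times> 'a) set \<Rightarrow> 'a \<Rightarrow> nat" where
  "indeg A v = card {u. (u, v) \<in> A}"

definition outdeg :: "('a \<times> 'a) set \<Rightarrow> 'a \<Rightarrow> nat" where
  "outdeg A v = card {w. (v, w) \<in> A}"

definition phylo_network :: "'a set \<Rightarrow> ('a \<times> 'a) set \<Rightarrow> 'a set \<Rightarrow> bool" where
  "phylo_network V A X \<longleftrightarrow>
     finite V \<and> A \<subseteq> V \<times> V \<and> X \<noteq> {} \<and> X \<subseteq> V \<and> acyclic A \<and>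
     ((V = X \<and> card X = 1 \<and> A = {}) \<or>
      (\<exists>r\<in>V. indeg A r = 0 \<and> outdeg A r \<ge> 1 \<and> (\<forall>v\<in>V - {r}. indeg A v \<ge> 1) \<and>
         X = {v\<in>V. outdeg A v = 0} \<and> (\<forall>x\<in>X. indeg A x = 1) \<and>
         (\<forall>v\<in>V - X - {r}. (indeg A v = 1 \<and> outdeg A v \<ge> 2) \<or> (indeg A v \<ge> 2 \<and> outdeg A v = 1))))"

definition net_root :: "'a set \<Rightarrow> ('a \<times> 'a) set \<Rightarrow> 'a" where
  "net_root V A = (THE r. r \<in> V \<and> indeg A r = 0)"

text \<open>Tree-based: N has a rooted spanning tree with the same root as N all of whose
  leaves lie in X.\<close>
definition tree_based :: "'a set \<Rightarrow> ('a \<times> 'a) set \<Rightarrow> 'a set \<Rightarrow> bool" where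
  "tree_based V A X \<longleftrightarrow>
     (\<exists>T \<subseteq> A. indeg T (net_root V A) = 0 \<and>
        (\<forall>v\<in>V - {net_root V A}. indeg T v = 1) \<and>
        (\<forall>v\<in>V. (net_root V A, v) \<in> T\<^sup>*) \<and>
        (\<forall>v\<in>V. outdeg T v = 0 \<longrightarrow> v \<in> X))"

definition antichain :: "('a \<times> 'a) set \<Rightarrow> 'a set \<Rightarrow> bool" where
  "antichain A S \<longleftrightarrow> (\<forall>u\<in>S. \<forall>v\<in>S. u \<noteq> v \<longrightarrow> (u, v) \<notin> A\<^sup>+)"

definition dipath :: "'a set \<Rightarrow> ('a \<times> 'a) set \<Rightarrow> 'a list \<Rightarrow> bool" where
  "dipath V A ps \<longleftrightarrow> ps \<noteq> [] \<and> distinct ps \<and> set ps \<subseteq> V \<and>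
     (\<forall>i. Suc i < length ps \<longrightarrow> (ps ! i, ps ! Suc i) \<in> A)"

definition leaf_path :: "'a set \<Rightarrow> ('a \<times> 'a) set \<Rightarrow> 'a set \<Rightarrow> 'a list \<Rightarrow> bool" where
  "leaf_path V A X ps \<longleftrightarrow> dipath V A ps \<and> last ps \<in> X"

definition vertex_disjoint :: "'a list set \<Rightarrow> bool" where
  "vertex_disjoint Ps \<longleftrightarrow> (\<forall>p\<in>Ps. \<forall>q\<in>Ps. p \<noteq> q \<longrightarrow> set p \<inter> set q = {})"

text \<open>The bipartite graph G_N: vertex classes Inl ` V and Inr ` V (two disjoint copies),
  with an edge {Inl u, Inr v} for each arc (u,v).\<close>
definition bip_edges :: "('a \<times> 'a) set \<Rightarrow> ('a + 'a) set set" where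
  "bip_edges A = {{Inl u, Inr v} | u v. (u, v) \<in> A}"

definition matching :: "('b set) set \<Rightarrow> ('b set) set \<Rightarrow> bool" where
  "matching E M \<longleftrightarrow> M \<subseteq> E \<and> (\<forall>e\<in>M. \<forall>e'\<in>M. e \<noteq> e' \<longrightarrow> e \<inter> e' = {})"

end

theory Submission
  imports Defs
begin

lemma fin_in: "finite A \<Longrightarrow> finite {u. (u, v) \<in> A}"
  by (rule finite_subset[of _ "fst ` A"]) force+
lemma fin_out: "finite A \<Longrightarrow> finite {w. (v, w) \<in> A}"
  by (rule finite_subset[of _ "snd ` A"]) force+

lemma basic:
  assumes N: "phylo_network V A X"
  shows "finite V \<and> A \<subseteq> V \<times> V \<and> acyclic A \<and> X \<subseteq> V \<and> finite A \<and>
    X = {v\<in>V. \<forall>w. (v,w) \<notin> A} \<and> net_root V A \<in> V \<and> (\<forall>u. (u, net_root V A) \<notin> A) \<and>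
    (\<forall>v\<in>V - {net_root V A}. \<exists>u. (u,v) \<in> A)"
proof -
  have fV: "finite V" and AV: "A \<subseteq> V \<times> V" and ac: "acyclic A" and XV: "X \<subseteq> V"
    using N unfolding phylo_network_def by auto
  have fA: "finite A" using fV AV by (meson finite_SigmaI finite_subset)
  have indeg0: "indeg A v = 0 \<longleftrightarrow> (\<forall>u. (u,v) \<notin> A)" for v
    using fin_in[OF fA, of v] unfolding indeg_def by auto
  have outdeg0: "outdeg A v = 0 \<longleftrightarrow> (\<forall>w. (v,w) \<notin> A)" for v
    using fin_out[OF fA, of v] unfolding outdeg_def by auto
  have indeg1: "indeg A v \<ge> 1 \<longleftrightarrow> (\<exists>u. (u,v) \<in> A)" for v
    using indeg0[of v] by auto
  from N consider "V = X \<and> card X = 1 \<and> A = {}" |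
     "(\<exists>r\<in>V. indeg A r = 0 \<and> outdeg A r \<ge> 1 \<and> (\<forall>v\<in>V - {r}. indeg A v \<ge> 1) \<and>
         X = {v\<in>V. outdeg A v = 0} \<and> (\<forall>x\<in>X. indeg A x = 1) \<and>
         (\<forall>v\<in>V - X - {r}. (indeg A v = 1 \<and> outdeg A v \<ge> 2) \<or> (indeg A v \<ge> 2 \<and> outdeg A v = 1)))"
    unfolding phylo_network_def by blast
  then show ?thesis
  proof cases
    case 1
    then obtain x where x: "X = {x}" "V = {x}" "A = {}" by (metis card_1_singletonE)
    have "net_root V A = x" unfolding net_root_def x indeg_def by auto
    then show ?thesis using x ac by auto
  next
    case 2
    then obtain r where r: "r \<in> V" "indeg A r = 0" "\<forall>v\<in>V - {r}. indeg A v \<ge> 1"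
       "X = {v\<in>V. outdeg A v = 0}" by blast
    have "net_root V A = r" unfolding net_root_def
    proof (rule the_equality)
      show "r \<in> V \<and> indeg A r = 0" using r by auto
      fix r' assume "r' \<in> V \<and> indeg A r' = 0" then show "r' = r" using r(3) by (metis DiffI not_one_le_zero singletonD)
    qed
    then show ?thesis using r fV AV ac XV fA indeg0 outdeg0 indeg1 by auto
  qed
qed


definition succ_ok :: "'a set \<Rightarrow> ('a \<times> 'a) set \<Rightarrow> 'a set \<Rightarrow> ('a \<Rightarrow> 'a) \<Rightarrow> bool" where
  "succ_ok V A X s \<longleftrightarrow> (\<forall>v\<in>V-X. (v, s v) \<in> A) \<and> inj_on s (V-X)"

context
  fixes V A X r
  assumes fV: "finite V" and AV: "A \<subseteq> V\<times>V" and ac: "acyclic A" and XV: "X \<subseteq> V"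
    and fA: "finite A" and Xdef: "X = {v\<in>V. \<forall>w. (v,w)\<notin>A}" and rV: "r \<in> V"
    and rin: "\<forall>u. (u,r)\<notin>A" and inarc: "\<forall>v\<in>V-{r}. \<exists>u. (u,v)\<in>A"
    and rdef: "net_root V A = r"
begin

lemma tb_to_succ:
  assumes "tree_based V A X" shows "\<exists>s. succ_ok V A X s"
proof -
  obtain T where TA: "T \<subseteq> A" and Tin: "\<forall>v\<in>V - {r}. indeg T v = 1"
     and Tleaf: "\<forall>v\<in>V. outdeg T v = 0 \<longrightarrow> v \<in> X"
    using assms unfolding tree_based_def rdef by blast
  have fT: "finite T" using fA TA finite_subset by blast
  define s where "s v = (SOME w. (v,w) \<in> T)" for v
  have sT: "(v, s v) \<in> T" if "v \<in> V - X" for v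
  proof -
    have "outdeg T v \<noteq> 0" using Tleaf that by auto
    then have "{w. (v,w) \<in> T} \<noteq> {}" unfolding outdeg_def by (metis card.empty)
    then show ?thesis unfolding s_def by (metis (mono_tags, lifting) empty_Collect_eq someI)
  qed
  have "inj_on s (V - X)"
  proof (rule inj_onI)
    fix v v' assume v: "v \<in> V - X" and v': "v' \<in> V - X" and eq: "s v = s v'"
    let ?w = "s v"
    have a1: "(v, ?w) \<in> T" using sT v by auto
    have a2: "(v', ?w) \<in> T" using sT v' eq by metis
    have "?w \<noteq> r" using a1 TA rin by auto
    moreover have "?w \<in> V" using a1 TA AV by auto
    ultimately have "indeg T ?w = 1" using Tin by auto
    then obtain u0 where "{u. (u, ?w) \<in> T} = {u0}" unfolding indeg_def by (meson card_1_singletonE)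
    then show "v = v'" using a1 a2 by (metis mem_Collect_eq singletonD)
  qed
  then show ?thesis unfolding succ_ok_def using sT TA by blast
qed

lemma wfA: "wf A" using ac fA by (simp add: finite_acyclic_wf)
lemma wfA': "wf (A\<inverse>)" using ac fA by (simp add: finite_acyclic_wf_converse)

lemma succ_to_tb:
  assumes "succ_ok V A X s" shows "tree_based V A X"
proof -
  have sA: "\<forall>v\<in>V-X. (v, s v) \<in> A" and inj: "inj_on s (V-X)" using assms unfolding succ_ok_def by auto
  define par where "par v = (if v \<in> s ` (V-X) then the_inv_into (V-X) s v else (SOME u. (u,v) \<in> A))" for v
  have parA: "(par v, v) \<in> A" if "v \<in> V - {r}" for v
  proof (cases "v \<in> s ` (V-X)")
    case True
    then obtain u where u: "u \<in> V - X" "v = s u" by auto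
    then have "par v = u" unfolding par_def using inj by (simp add: the_inv_into_f_f)
    then show ?thesis using sA u by auto
  next
    case False
    then show ?thesis unfolding par_def using inarc that by (metis (mono_tags, lifting) someI_ex)
  qed
  define T where "T = {(u,v). v \<in> V - {r} \<and> u = par v}"
  have TA: "T \<subseteq> A" using parA unfolding T_def by auto
  have fT: "finite T" using fA TA finite_subset by blast
  have "indeg T r = 0" unfolding indeg_def T_def by auto
  moreover have "\<forall>v\<in>V - {r}. indeg T v = 1"
  proof
    fix v assume "v \<in> V - {r}"
    then have "{u. (u,v) \<in> T} = {par v}" unfolding T_def by auto
    then show "indeg T v = 1" unfolding indeg_def by simp
  qed
  moreover have "\<forall>v\<in>V. (r, v) \<in> T\<^sup>*"
  proof -
    have "v \<in> V \<longrightarrow> (r, v) \<in> T\<^sup>*" for v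
    proof (induction v rule: wf_induct[OF wfA])
      case (1 v)
      show ?case
      proof
        assume vV: "v \<in> V"
        show "(r, v) \<in> T\<^sup>*"
        proof (cases "v = r")
          case True then show ?thesis by simp
        next
          case False
          then have pA: "(par v, v) \<in> A" using parA vV by auto
          then have "(r, par v) \<in> T\<^sup>*" using 1 AV by blast
          moreover have "(par v, v) \<in> T" unfolding T_def using False vV by auto
          ultimately show ?thesis by (meson rtrancl.rtrancl_into_rtrancl)
        qed
      qed
    qed
    then show ?thesis by blast
  qed
  moreover have "\<forall>v\<in>V. outdeg T v = 0 \<longrightarrow> v \<in> X"
  proof (intro ballI impI, rule ccontr)
    fix v assume vV: "v \<in> V" and o: "outdeg T v = 0" and nX: "v \<notin> X"
    have svA: "(v, s v) \<in> A" using sA vV nX by auto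
    then have "s v \<noteq> r" using rin by auto
    moreover have "s v \<in> V" using svA AV by auto
    moreover have "par (s v) = v" unfolding par_def using inj vV nX by (simp add: the_inv_into_f_f)
    ultimately have "(v, s v) \<in> T" unfolding T_def by auto
    then have "{w. (v,w) \<in> T} \<noteq> {}" by auto
    then have "outdeg T v \<noteq> 0" unfolding outdeg_def using fin_out[OF fT] by auto
    then show False using o by simp
  qed
  ultimately show ?thesis unfolding tree_based_def rdef using TA by blast
qed


lemma succ_to_paths:
  assumes "succ_ok V A X s"
  shows "\<exists>Ps. (\<forall>p\<in>Ps. leaf_path V A X p) \<and> vertex_disjoint Ps \<and> (\<Union>p\<in>Ps. set p) = V"
proof -
  have sA: "\<forall>v\<in>V-X. (v, s v) \<in> A" and inj: "inj_on s (V-X)" using assms unfolding succ_ok_def by auto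
  have sV: "s v \<in> V" if "v \<in> V - X" for v using sA AV that by auto
  have reach: "v \<in> V \<longrightarrow> (\<exists>m. (s^^m) v \<in> X \<and> (\<forall>i<m. (s^^i) v \<in> V - X))" for v
  proof (induction v rule: wf_induct[OF wfA'])
    case (1 v)
    show ?case
    proof
      assume vV: "v \<in> V"
      show "\<exists>m. (s^^m) v \<in> X \<and> (\<forall>i<m. (s^^i) v \<in> V - X)"
      proof (cases "v \<in> X")
        case True then show ?thesis by (intro exI[of _ 0]) auto
      next
        case False
        then have "(s v, v) \<in> A\<inverse>" using sA vV by auto
        moreover have "s v \<in> V" using sV vV False by auto
        ultimately obtain m where m: "(s^^m) (s v) \<in> X" "\<forall>i<m. (s^^i) (s v) \<in> V - X" using 1 by blast
        have "(s^^Suc m) v \<in> X" using m(1) by (simp add: funpow_Suc_right del: funpow.simps)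
        moreover have "\<forall>i<Suc m. (s^^i) v \<in> V - X"
        proof (intro allI impI)
          fix i assume "i < Suc m"
          then show "(s^^i) v \<in> V - X"
          proof (cases i)
            case 0 then show ?thesis using vV False by simp
          next
            case (Suc k) then show ?thesis using m(2) \<open>i < Suc m\<close>
              by (simp add: funpow_Suc_right del: funpow.simps)
          qed
        qed
        ultimately show ?thesis by blast
      qed
    qed
  qed
  define n where "n v = (LEAST m. (s^^m) v \<in> X)" for v
  have nX: "(s^^(n v)) v \<in> X" if "v \<in> V" for v
    using reach[of v] that unfolding n_def by (metis LeastI)
  have nlt: "(s^^i) v \<in> V - X" if H: "v \<in> V" "i < n v" for v i
  proof -
    obtain m where m: "(s^^m) v \<in> X" "\<forall>i<m. (s^^i) v \<in> V - X" using reach[of v] H by blast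
    have "n v \<le> m" unfolding n_def using m(1) by (rule Least_le)
    then show ?thesis using m(2) H by auto
  qed
  have inV: "(s^^i) v \<in> V" if "v \<in> V" "i \<le> n v" for v i
    using nX[of v] nlt[of v i] that XV by (cases "i = n v") auto
  have step: "((s^^i) v, (s^^Suc i) v) \<in> A" if "v \<in> V" "i < n v" for v i
    using sA nlt[OF that] by simp
  have tr: "((s^^i) v, (s^^j) v) \<in> A\<^sup>+" if "v \<in> V" "i < j" "j \<le> n v" for v i j
    using that
  proof (induction j)
    case 0 then show ?case by simp
  next
    case (Suc j)
    have st: "((s^^j) v, (s^^Suc j) v) \<in> A" using step[of v j] Suc.prems by simp
    show ?case
    proof (cases "i = j")
      case True then show ?thesis using st by auto
    next
      case False
      then have "((s^^i) v, (s^^j) v) \<in> A\<^sup>+" using Suc by simp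
      then show ?thesis using st by (meson trancl.trancl_into_trancl)
    qed
  qed
  define p where "p v = map (\<lambda>i. (s^^i) v) [0..<Suc (n v)]" for v
  have setp: "set (p v) = {(s^^i) v | i. i \<le> n v}" for v
    unfolding p_def by (auto simp del: upt_Suc simp add: atLeast0_atMost_Suc[symmetric] less_Suc_eq_le)
  have lp: "leaf_path V A X (p v)" if vV: "v \<in> V" for v
  proof -
    have "distinct (p v)"
      unfolding p_def distinct_conv_nth
    proof (intro allI impI)
      fix i j assume "i < length (map (\<lambda>i. (s ^^ i) v) [0..<Suc (n v)])"
        "j < length (map (\<lambda>i. (s ^^ i) v) [0..<Suc (n v)])" "i \<noteq> j"
      then have ij: "i \<le> n v" "j \<le> n v" "i \<noteq> j" by auto
      show "map (\<lambda>i. (s ^^ i) v) [0..<Suc (n v)] ! i \<noteq> map (\<lambda>i. (s ^^ i) v) [0..<Suc (n v)] ! j"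
      proof
        assume "map (\<lambda>i. (s ^^ i) v) [0..<Suc (n v)] ! i = map (\<lambda>i. (s ^^ i) v) [0..<Suc (n v)] ! j"
        then have eq: "(s^^i) v = (s^^j) v" using ij by (simp del: upt_Suc)
        show False
        proof (cases "i < j")
          case True then show False using tr[OF vV True ij(2)] eq ac unfolding acyclic_def by auto
        next
          case False then have "j < i" using ij by auto
          then show False using tr[OF vV _ ij(1)] eq ac unfolding acyclic_def by metis
        qed
      qed
    qed
    moreover have "set (p v) \<subseteq> V" using inV vV unfolding setp by auto
    moreover have "\<forall>i. Suc i < length (p v) \<longrightarrow> (p v ! i, p v ! Suc i) \<in> A"
      unfolding p_def using step[OF vV] by (auto simp del: upt_Suc)
    moreover have "last (p v) \<in> X" unfolding p_def using nX[OF vV] by (simp add: last_map)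
    ultimately show ?thesis unfolding leaf_path_def dipath_def p_def by auto
  qed
  define St where "St = V - s ` (V - X)"
  have uniq: "v = v'" if "v \<in> St" "v' \<in> St" "i \<le> n v" "j \<le> n v'" "(s^^i) v = (s^^j) v'" for v v' i j
    using that
  proof (induction i arbitrary: j)
    case 0
    show ?case
    proof (cases j)
      case 0 then show ?thesis using "0.prems" by simp
    next
      case (Suc k)
      have "(s^^k) v' \<in> V - X" using nlt[of v' k] Suc "0.prems" unfolding St_def by auto
      moreover have "v = s ((s^^k) v')" using "0.prems" Suc by simp
      ultimately show ?thesis using "0.prems"(1) unfolding St_def by auto
    qed
  next
    case (Suc i)
    show ?case
    proof (cases j)
      case 0
      have "(s^^i) v \<in> V - X" using nlt[of v i] Suc.prems unfolding St_def by auto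
      moreover have "v' = s ((s^^i) v)" using Suc.prems 0 by simp
      ultimately show ?thesis using Suc.prems(2) unfolding St_def by auto
    next
      case (Suc k)
      have a: "(s^^i) v \<in> V - X" using nlt[of v i] Suc.prems unfolding St_def by auto
      have b: "(s^^k) v' \<in> V - X" using nlt[of v' k] Suc.prems Suc unfolding St_def by auto
      have "s ((s^^i) v) = s ((s^^k) v')" using Suc.prems Suc by simp
      then have "(s^^i) v = (s^^k) v'" using inj a b by (meson inj_onD)
      then show ?thesis using Suc.IH[of k] Suc.prems Suc by simp
    qed
  qed
  have cover: "w \<in> V \<longrightarrow> (\<exists>v\<in>St. \<exists>i\<le>n v. (s^^i) v = w)" for w
  proof (induction w rule: wf_induct[OF wfA])
    case (1 w)
    show ?case
    proof
      assume wV: "w \<in> V"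
      show "\<exists>v\<in>St. \<exists>i\<le>n v. (s^^i) v = w"
      proof (cases "w \<in> St")
        case True then show ?thesis by (intro bexI[of _ w] exI[of _ 0]) auto
      next
        case False
        then obtain u where u: "u \<in> V - X" "w = s u" using wV unfolding St_def by auto
        then have "(u, w) \<in> A" using sA by auto
        then obtain v i where v: "v \<in> St" "i \<le> n v" "(s^^i) v = u" using 1 u by blast
        have vV: "v \<in> V" using v unfolding St_def by auto
        have "i \<noteq> n v" using nX[OF vV] v u by auto
        then have "Suc i \<le> n v" using v by auto
        moreover have "(s^^Suc i) v = w" using v u by simp
        ultimately show ?thesis using v by blast
      qed
    qed
  qed
  let ?Ps = "p ` St"
  have "\<forall>q\<in>?Ps. leaf_path V A X q" using lp unfolding St_def by auto
  moreover have "vertex_disjoint ?Ps"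
    unfolding vertex_disjoint_def
  proof (intro ballI impI)
    fix q q' assume q: "q \<in> ?Ps" and q': "q' \<in> ?Ps" and ne: "q \<noteq> q'"
    obtain v where v: "v \<in> St" "q = p v" using q by auto
    obtain v' where v': "v' \<in> St" "q' = p v'" using q' by auto
    show "set q \<inter> set q' = {}"
    proof (rule ccontr)
      assume "set q \<inter> set q' \<noteq> {}"
      then obtain i j where "i \<le> n v" "j \<le> n v'" "(s^^i) v = (s^^j) v'" using v v' setp by auto
      then have "v = v'" using uniq v v' by blast
      then show False using ne v v' by simp
    qed
  qed
  moreover have "(\<Union>q\<in>?Ps. set q) = V"
  proof
    show "(\<Union>q\<in>?Ps. set q) \<subseteq> V" using lp unfolding St_def leaf_path_def dipath_def by auto
    show "V \<subseteq> (\<Union>q\<in>?Ps. set q)"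
    proof
      fix w assume "w \<in> V"
      then obtain v i where "v \<in> St" "i \<le> n v" "(s^^i) v = w" using cover by blast
      then show "w \<in> (\<Union>q\<in>?Ps. set q)" using setp by blast
    qed
  qed
  ultimately show ?thesis by blast
qed

lemma paths_to_succ:
  assumes lp: "\<forall>p\<in>Ps. leaf_path V A X p" and vd: "vertex_disjoint Ps" and cov: "(\<Union>p\<in>Ps. set p) = V"
  shows "\<exists>s. succ_ok V A X s"
proof -
  have ex: "\<exists>w. \<exists>p\<in>Ps. \<exists>i. Suc i < length p \<and> p!i = v \<and> p!Suc i = w" if H: "v \<in> V - X" for v
  proof -
    obtain p where p: "p \<in> Ps" "v \<in> set p" using cov H by auto
    then obtain i where i: "i < length p" "p!i = v" by (meson in_set_conv_nth)
    have "last p \<in> X" "p \<noteq> []" using lp p unfolding leaf_path_def dipath_def by auto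
    moreover have "v \<notin> X" using H by simp
    ultimately have "i \<noteq> length p - 1" using i(2) by (metis last_conv_nth)
    then have "Suc i < length p" using i by auto
    then show ?thesis using p i by blast
  qed
  define s where "s v = (SOME w. \<exists>p\<in>Ps. \<exists>i. Suc i < length p \<and> p!i = v \<and> p!Suc i = w)" for v
  have sP: "\<exists>p\<in>Ps. \<exists>i. Suc i < length p \<and> p!i = v \<and> p!Suc i = s v" if "v \<in> V - X" for v
    unfolding s_def using someI_ex[OF ex[OF that]] .
  have "(v, s v) \<in> A" if H: "v \<in> V - X" for v
  proof -
    obtain p i where pi: "p \<in> Ps" "Suc i < length p" "p!i = v" "p!Suc i = s v" using sP[OF H] by blast
    have "dipath V A p" using lp pi(1) unfolding leaf_path_def by blast
    then have "(p!i, p!Suc i) \<in> A" using pi(2) unfolding dipath_def by blast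
    then show ?thesis using pi by simp
  qed
  moreover have "inj_on s (V - X)"
  proof (rule inj_onI)
    fix v v' assume v: "v \<in> V - X" and v': "v' \<in> V - X" and eq: "s v = s v'"
    obtain p i where pi: "p \<in> Ps" "Suc i < length p" "p!i = v" "p!Suc i = s v" using sP[OF v] by blast
    obtain q j where qj: "q \<in> Ps" "Suc j < length q" "q!j = v'" "q!Suc j = s v'" using sP[OF v'] by blast
    have i1: "s v \<in> set p" using pi by (metis nth_mem)
    have i2: "s v \<in> set q" using qj eq by (metis nth_mem)
    have "p = q"
    proof (rule ccontr)
      assume "p \<noteq> q"
      then have "set p \<inter> set q = {}" using vd pi(1) qj(1) unfolding vertex_disjoint_def by blast
      then show False using i1 i2 by blast
    qed
    moreover have "distinct p" using lp pi(1) unfolding leaf_path_def dipath_def by simp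
    moreover have "p ! Suc i = p ! Suc j" using pi(4) qj(4) eq \<open>p = q\<close> by simp
    ultimately have "Suc i = Suc j" using pi(2) qj(2) nth_eq_iff_index_eq by metis
    then show "v = v'" using pi qj \<open>p = q\<close> by simp
  qed
  ultimately show ?thesis unfolding succ_ok_def by blast
qed

lemma paths_card:
  assumes lp: "\<forall>p\<in>Ps. leaf_path V A X p" and vd: "vertex_disjoint Ps" and cov: "(\<Union>p\<in>Ps. set p) = V"
  shows "card Ps = card X" "antichain A X"
proof -
  have ne: "p \<noteq> []" if "p \<in> Ps" for p using lp that unfolding leaf_path_def dipath_def by auto
  have "inj_on last Ps"
  proof (rule inj_onI)
    fix p q assume "p \<in> Ps" "q \<in> Ps" "last p = last q"
    then have "last p \<in> set p \<inter> set q" using ne by (metis IntI last_in_set)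
    then show "p = q" using vd \<open>p \<in> Ps\<close> \<open>q \<in> Ps\<close> unfolding vertex_disjoint_def by blast
  qed
  moreover have "last ` Ps = X"
  proof
    show "last ` Ps \<subseteq> X" using lp unfolding leaf_path_def by auto
    show "X \<subseteq> last ` Ps"
    proof
      fix x assume xX: "x \<in> X"
      then obtain p where p: "p \<in> Ps" "x \<in> set p" using cov XV by auto
      then obtain i where i: "i < length p" "p!i = x" by (meson in_set_conv_nth)
      have "\<not> Suc i < length p"
      proof
        assume "Suc i < length p"
        then have "(x, p!Suc i) \<in> A" using lp p i unfolding leaf_path_def dipath_def by blast
        then show False using xX Xdef by auto
      qed
      then have "i = length p - 1" using i by linarith
      then have "x = last p" using i ne p by (simp add: last_conv_nth)
      then show "x \<in> last ` Ps" using p by blast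
    qed
  qed
  ultimately show "card Ps = card X" using card_image by fastforce
  show "antichain A X" unfolding antichain_def
  proof (intro ballI impI)
    fix u v assume "u \<in> X" "v \<in> X" "u \<noteq> v"
    show "(u, v) \<notin> A\<^sup>+"
    proof
      assume "(u, v) \<in> A\<^sup>+"
      then obtain w where "(u, w) \<in> A" by (meson converse_tranclE)
      then show False using \<open>u \<in> X\<close> Xdef by auto
    qed
  qed
qed

lemma pair_eq: "{Inl u, Inr w} = {Inl u', Inr w'} \<longleftrightarrow> u = u' \<and> w = w'"
  by (auto simp: doubleton_eq_iff)

lemma succ_to_match:
  assumes "succ_ok V A X s"
  shows "\<exists>M. matching (bip_edges A) M \<and> card M = card V - card X"
proof -
  have sA: "\<forall>v\<in>V-X. (v, s v) \<in> A" and inj: "inj_on s (V-X)" using assms unfolding succ_ok_def by auto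
  define e where "e v = {Inl v, Inr (s v)}" for v
  let ?M = "e ` (V - X)"
  have "?M \<subseteq> bip_edges A" unfolding bip_edges_def e_def using sA by blast
  moreover have "\<forall>a\<in>?M. \<forall>b\<in>?M. a \<noteq> b \<longrightarrow> a \<inter> b = {}"
  proof (intro ballI impI)
    fix a b assume "a \<in> ?M" "b \<in> ?M" "a \<noteq> b"
    then obtain v v' where "v \<in> V - X" "v' \<in> V - X" "a = e v" "b = e v'" by auto
    moreover have "v \<noteq> v'" using calculation \<open>a \<noteq> b\<close> by auto
    ultimately have "s v \<noteq> s v'" using inj by (meson inj_onD)
    then show "a \<inter> b = {}" using \<open>v \<noteq> v'\<close> \<open>a = e v\<close> \<open>b = e v'\<close> unfolding e_def by auto
  qed
  moreover have "inj_on e (V - X)" unfolding e_def by (rule inj_onI) (simp add: pair_eq)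
  then have "card ?M = card V - card X"
    using card_image card_Diff_subset[OF finite_subset[OF XV fV] XV] by metis
  ultimately show ?thesis unfolding matching_def by blast
qed

lemma match_to_succ:
  assumes m: "matching (bip_edges A) M" and c: "card M = card V - card X"
  shows "\<exists>s. succ_ok V A X s"
proof -
  have MB: "M \<subseteq> bip_edges A" and dj: "\<forall>e\<in>M. \<forall>e'\<in>M. e \<noteq> e' \<longrightarrow> e \<inter> e' = {}"
    using m unfolding matching_def by auto
  have fB: "finite (bip_edges A)"
  proof -
    have "bip_edges A = (\<lambda>(u,v). {Inl u, Inr v}) ` A" unfolding bip_edges_def by auto
    then show ?thesis using fA by (metis finite_imageI)
  qed
  have fM: "finite M" using MB fB finite_subset by blast
  have eform: "\<exists>u w. (u,w) \<in> A \<and> e = {Inl u, Inr w}" if "e \<in> M" for e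
    using that MB unfolding bip_edges_def by blast
  define lf where "lf e = (SOME u. \<exists>w. (u,w) \<in> A \<and> e = {Inl u, Inr w})" for e
  have lfP: "\<exists>w. (lf e, w) \<in> A \<and> e = {Inl (lf e), Inr w}" if "e \<in> M" for e
    unfolding lf_def using someI_ex[OF eform[OF that]] .
  have "inj_on lf M"
  proof (rule inj_onI)
    fix a b assume "a \<in> M" "b \<in> M" "lf a = lf b"
    have "Inl (lf a) \<in> a" using lfP[OF \<open>a \<in> M\<close>] by force
    moreover have "Inl (lf a) \<in> b" using lfP[OF \<open>b \<in> M\<close>] \<open>lf a = lf b\<close> by force
    ultimately show "a = b" using dj \<open>a \<in> M\<close> \<open>b \<in> M\<close> by blast
  qed
  then have "card (lf ` M) = card M" by (rule card_image)
  then have cL: "card (lf ` M) = card (V - X)"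
    using c card_Diff_subset[OF finite_subset[OF XV fV] XV] by simp
  have "lf ` M \<subseteq> V - X"
  proof
    fix u assume "u \<in> lf ` M"
    then obtain e w where "e \<in> M" "u = lf e" "(u, w) \<in> A" using lfP by blast
    then show "u \<in> V - X" using AV Xdef by auto
  qed
  then have L: "lf ` M = V - X" using cL by (meson card_subset_eq fV finite_Diff)
  define s where "s u = (SOME w. {Inl u, Inr w} \<in> M)" for u
  have sM: "{Inl u, Inr (s u)} \<in> M" if H: "u \<in> V - X" for u
  proof -
    obtain e where "e \<in> M" "u = lf e" using L H by (metis imageE)
    then have "\<exists>w. {Inl u, Inr w} \<in> M" using lfP by metis
    then show ?thesis unfolding s_def by (rule someI_ex)
  qed
  have "(u, s u) \<in> A" if H: "u \<in> V - X" for u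
  proof -
    obtain a b where "(a,b) \<in> A" "{Inl u, Inr (s u)} = {Inl a, Inr b}"
      using eform[OF sM[OF H]] by blast
    then show ?thesis by (metis pair_eq)
  qed
  moreover have "inj_on s (V - X)"
  proof (rule inj_onI)
    fix u u' assume u: "u \<in> V - X" and u': "u' \<in> V - X" and eq: "s u = s u'"
    have "Inr (s u) \<in> {Inl u, Inr (s u)} \<inter> {Inl u', Inr (s u')}" using eq by auto
    then show "u = u'" using dj sM[OF u] sM[OF u'] pair_eq by (metis empty_iff)
  qed
  ultimately show ?thesis unfolding succ_ok_def by blast
qed
end


theorem theorem3:
  fixes V :: "'a set" and A :: "('a \<times> 'a) set" and X :: "'a set"
  assumes "phylo_network V A X"
  shows "(tree_based V A X \<longleftrightarrow>
            (\<exists>S Ps. S \<subseteq> V \<and> antichain A S \<and> (\<forall>p\<in>Ps. leaf_path V A X p) \<and>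
               vertex_disjoint Ps \<and> (\<Union>p\<in>Ps. set p) = V \<and> card Ps = card S))
       \<and> (tree_based V A X \<longleftrightarrow>
            (\<forall>U \<subseteq> V. \<exists>Ps. (\<forall>p\<in>Ps. leaf_path V A X p) \<and> vertex_disjoint Ps \<and>
               (\<forall>u\<in>U. \<exists>!p. p \<in> Ps \<and> u \<in> set p)))
       \<and> (tree_based V A X \<longleftrightarrow>
            (\<exists>Ps. (\<forall>p\<in>Ps. leaf_path V A X p) \<and> vertex_disjoint Ps \<and> (\<Union>p\<in>Ps. set p) = V))
       \<and> (tree_based V A X \<longleftrightarrow>
            (\<exists>M. matching (bip_edges A) M \<and> card M = card V - card X))"
proof -
  note B = basic[OF assms]
  have fV: "finite V" and AV: "A \<subseteq> V \<times> V" and ac: "acyclic A" and XV: "X \<subseteq> V" and fA: "finite A"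
    and Xdef: "X = {v\<in>V. \<forall>w. (v,w) \<notin> A}" and rV: "net_root V A \<in> V"
    and rin: "\<forall>u. (u, net_root V A) \<notin> A" and inarc: "\<forall>v\<in>V - {net_root V A}. \<exists>u. (u,v) \<in> A"
    using B by blast+
  note H = fV AV ac XV fA Xdef rV rin inarc refl
  have TS: "tree_based V A X \<longleftrightarrow> (\<exists>s. succ_ok V A X s)"
    using tb_to_succ[OF H] succ_to_tb[OF H] by blast
  have SP: "(\<exists>s. succ_ok V A X s) \<longleftrightarrow>
      (\<exists>Ps. (\<forall>p\<in>Ps. leaf_path V A X p) \<and> vertex_disjoint Ps \<and> (\<Union>p\<in>Ps. set p) = V)"
    using succ_to_paths[OF H] paths_to_succ[OF H] by blast
  have SM: "(\<exists>s. succ_ok V A X s) \<longleftrightarrow> (\<exists>M. matching (bip_edges A) M \<and> card M = card V - card X)"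
    using succ_to_match[OF H] match_to_succ[OF H] by blast
  have P2: "(\<exists>Ps. (\<forall>p\<in>Ps. leaf_path V A X p) \<and> vertex_disjoint Ps \<and> (\<Union>p\<in>Ps. set p) = V) \<longleftrightarrow>
      (\<exists>S Ps. S \<subseteq> V \<and> antichain A S \<and> (\<forall>p\<in>Ps. leaf_path V A X p) \<and>
               vertex_disjoint Ps \<and> (\<Union>p\<in>Ps. set p) = V \<and> card Ps = card S)"
  proof
    assume "\<exists>Ps. (\<forall>p\<in>Ps. leaf_path V A X p) \<and> vertex_disjoint Ps \<and> (\<Union>p\<in>Ps. set p) = V"
    then obtain Ps where P: "\<forall>p\<in>Ps. leaf_path V A X p" "vertex_disjoint Ps" "(\<Union>p\<in>Ps. set p) = V" by blast
    have "card Ps = card X" "antichain A X" using paths_card[OF H P] by auto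
    then show "\<exists>S Ps. S \<subseteq> V \<and> antichain A S \<and> (\<forall>p\<in>Ps. leaf_path V A X p) \<and>
               vertex_disjoint Ps \<and> (\<Union>p\<in>Ps. set p) = V \<and> card Ps = card S"
      using P XV by blast
  qed blast
  have P3: "(\<exists>Ps. (\<forall>p\<in>Ps. leaf_path V A X p) \<and> vertex_disjoint Ps \<and> (\<Union>p\<in>Ps. set p) = V) \<longleftrightarrow>
      (\<forall>U \<subseteq> V. \<exists>Ps. (\<forall>p\<in>Ps. leaf_path V A X p) \<and> vertex_disjoint Ps \<and>
               (\<forall>u\<in>U. \<exists>!p. p \<in> Ps \<and> u \<in> set p))"
  proof
    assume "\<exists>Ps. (\<forall>p\<in>Ps. leaf_path V A X p) \<and> vertex_disjoint Ps \<and> (\<Union>p\<in>Ps. set p) = V"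
    then obtain Ps where P: "\<forall>p\<in>Ps. leaf_path V A X p" "vertex_disjoint Ps" "(\<Union>p\<in>Ps. set p) = V" by blast
    have "\<forall>u\<in>V. \<exists>!p. p \<in> Ps \<and> u \<in> set p"
    proof
      fix u assume "u \<in> V"
      then obtain p where p: "p \<in> Ps" "u \<in> set p" using P(3) by blast
      show "\<exists>!p. p \<in> Ps \<and> u \<in> set p"
      proof (rule ex1I[of _ p])
        show "p \<in> Ps \<and> u \<in> set p" using p by simp
        fix q assume "q \<in> Ps \<and> u \<in> set q"
        then show "q = p" using P(2) p unfolding vertex_disjoint_def by blast
      qed
    qed
    note Q = this
    show "\<forall>U \<subseteq> V. \<exists>Ps. (\<forall>p\<in>Ps. leaf_path V A X p) \<and> vertex_disjoint Ps \<and>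
               (\<forall>u\<in>U. \<exists>!p. p \<in> Ps \<and> u \<in> set p)"
    proof (intro allI impI)
      fix U assume "U \<subseteq> V"
      then have "\<forall>u\<in>U. \<exists>!p. p \<in> Ps \<and> u \<in> set p" using Q by (meson subsetD)
      then show "\<exists>Ps. (\<forall>p\<in>Ps. leaf_path V A X p) \<and> vertex_disjoint Ps \<and>
               (\<forall>u\<in>U. \<exists>!p. p \<in> Ps \<and> u \<in> set p)" using P(1,2) by (intro exI[of _ Ps]) simp
    qed
  next
    assume "\<forall>U \<subseteq> V. \<exists>Ps. (\<forall>p\<in>Ps. leaf_path V A X p) \<and> vertex_disjoint Ps \<and>
               (\<forall>u\<in>U. \<exists>!p. p \<in> Ps \<and> u \<in> set p)"
    then have "\<exists>Ps. (\<forall>p\<in>Ps. leaf_path V A X p) \<and> vertex_disjoint Ps \<and>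
               (\<forall>u\<in>V. \<exists>!p. p \<in> Ps \<and> u \<in> set p)" by (meson order_refl)
    then obtain Ps where P: "\<forall>p\<in>Ps. leaf_path V A X p" "vertex_disjoint Ps" "\<forall>u\<in>V. \<exists>!p. p \<in> Ps \<and> u \<in> set p"
      by (elim exE conjE) blast
    have "(\<Union>p\<in>Ps. set p) = V"
    proof
      show "(\<Union>p\<in>Ps. set p) \<subseteq> V" using P(1) unfolding leaf_path_def dipath_def by blast
      show "V \<subseteq> (\<Union>p\<in>Ps. set p)" using P(3) by blast
    qed
    then show "\<exists>Ps. (\<forall>p\<in>Ps. leaf_path V A X p) \<and> vertex_disjoint Ps \<and> (\<Union>p\<in>Ps. set p) = V"
      using P by blast
  qed
  have TP: "tree_based V A X \<longleftrightarrow>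
      (\<exists>Ps. (\<forall>p\<in>Ps. leaf_path V A X p) \<and> vertex_disjoint Ps \<and> (\<Union>p\<in>Ps. set p) = V)"
    using TS SP by (rule trans)
  have TM: "tree_based V A X \<longleftrightarrow> (\<exists>M. matching (bip_edges A) M \<and> card M = card V - card X)"
    using TS SM by (rule trans)
  show ?thesis using trans[OF TP P2] trans[OF TP P3] TP TM by (intro conjI)
qed

end
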